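(* Let $u:[0,\infty)\to\mathbb R$ be continuous and let $(x_1,x_2)$ be a solution of the age-structured predator–prey system $$\partial_t x_1+\partial_a x_1=-x_1\Big[\mu_1(a)+u(t)+\int_0^A g_1(\alpha)x_2(\alpha,t)d\alpha\Big],\quad \partial_t x_2+\partial_a x_2=-x_2\Big[\mu_2(a)+u(t)+\frac{1}{\int_0^A g_2(\alpha)x_1(\alpha,t)d\alpha}\Big],$$ $x_i(0,t)=\int_0^A k_i(a)x_i(a,t)da$, with $x_i(\cdot,t)\in\mathcal F_i$ for all $t\ge0$ and initial data $x_i(\cdot,0)=x_{i,0}\in\mathcal F_i$. Define $\eta_i(t)=\ln\Pi_i[x_i(\cdot,t)]$. Then there are functions $\psi_i:[-A,\infty)\to(-1,\infty)$ such that $$\psi_i(t-a)=\frac{x_i(a,t)}{x_i^*(a)\,\Pi_i[x_i(\cdot,t)]}-1\quad\text{for all }t\ge0,\ a\in[0,A],$$ so that $x_i(a,t)=x_i^*(a)e^{\eta_i(t)}(1+\psi_i(t-a))$, and $(\eta,\psi)$ satisfy $$\dot\eta_1(t)=\zeta_1-u(t)-e^{\eta_2(t)}\int_0^A g_1(a)x_2^*(a)(1+\psi_2(t-a))\,da,$$ $$\dot\eta_2(t)=\zeta_2-u(t)-\frac{e^{-\eta_1(t)}}{\int_0^A g_2(a)x_1^*(a)(1+\psi_1(t-a))\,da},$$ $$\psi_i(t)=\int_0^A\tilde k_i(a)\psi_i(t-a)\,da\quad(t\ge0),$$ with $\eta_i(0)=\ln\Pi_i[x_{i,0}]$ and $\psi_i(-a)=\frac{x_{i,0}(a)}{x_i^*(a)\Pi_i[x_{i,0}]}-1$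 for $a\in[0,A]$.
   Context: $A>0$; for $i=1,2$, $\mu_i,k_i,g_i:[0,A]\to[0,\infty)$ are (piecewise continuous) with positive integrals over $[0,A]$. $\zeta_i\in\mathbb R$ is the unique real number with $\int_0^A k_i(a)e^{-\int_0^a(\mu_i(s)+\zeta_i)ds}da=1$, and $\tilde k_i(a)=k_i(a)e^{-\int_0^a(\mu_i(s)+\zeta_i)ds}$. $x_i^*(a)=x_i^*(0)e^{-\int_0^a(\zeta_i+\mu_i(s))ds}$ with some constant $x_i^*(0)>0$ (the equilibrium profiles). $\mathcal F_i$ is the set of functions $\xi\in PC^1([0,A];(0,\infty))$ with $\xi(0)=\int_0^A k_i(a)\xi(a)da$, where $PC^1$ denotes continuous functions that are continuously differentiable except at finitely many points where one-sided limits of the derivative exist and are finite. The functionals are $\Pi_i[\xi]=\frac{\int_0^A\pi_{0,i}(a)\xi(a)da}{\int_0^A a\,k_i(a)x_i^*(a)da}$ with $\pi_{0,i}(a)=\int_a^A k_i(s)e^{\int_s^a(\zeta_i+\mu_i(l))dl}ds$. *)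

theory Defs
  imports "HOL-Analysis.Analysis"
begin

definition pc_on :: "real \<Rightarrow> real \<Rightarrow> (real \<Rightarrow> real) \<Rightarrow> bool" where
  "pc_on a b f \<longleftrightarrow> (\<exists>S. finite S \<and> continuous_on ({a..b} - S) f \<and>
      (\<forall>s\<in>S \<inter> {a<..b}. \<exists>l. (f \<longlongrightarrow> l) (at_left s)) \<and>
      (\<forall>s\<in>S \<inter> {a..<b}. \<exists>l. (f \<longlongrightarrow> l) (at_right s)))"

definition pc1_on :: "real \<Rightarrow> real \<Rightarrow> (real \<Rightarrow> real) \<Rightarrow> bool" where
  "pc1_on a b f \<longleftrightarrow> continuous_on {a..b} f \<and> (\<exists>S. finite S \<and>
      (\<forall>x\<in>{a<..<b} - S. f differentiable (at x)) \<and>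
      continuous_on ({a<..<b} - S) (deriv f) \<and>
      (\<forall>s\<in>{a<..b}. s \<in> S \<or> s = b \<longrightarrow> (\<exists>l. (deriv f \<longlongrightarrow> l) (at_left s))) \<and>
      (\<forall>s\<in>{a..<b}. s \<in> S \<or> s = a \<longrightarrow> (\<exists>l. (deriv f \<longlongrightarrow> l) (at_right s))))"

definition Fset :: "real \<Rightarrow> (real \<Rightarrow> real) \<Rightarrow> (real \<Rightarrow> real) set" where
  "Fset A k = {\<xi>. pc1_on 0 A \<xi> \<and> (\<forall>a\<in>{0..A}. \<xi> a > 0) \<and>
                  \<xi> 0 = integral {0..A} (\<lambda>a. k a * \<xi> a)}"

definition xstar :: "(real \<Rightarrow> real) \<Rightarrow> real \<Rightarrow> real \<Rightarrow> real \<Rightarrow> real" where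
  "xstar mu zeta c a = c * exp (- integral {0..a} (\<lambda>s. zeta + mu s))"

definition ktilde :: "(real \<Rightarrow> real) \<Rightarrow> (real \<Rightarrow> real) \<Rightarrow> real \<Rightarrow> real \<Rightarrow> real" where
  "ktilde k mu zeta a = k a * exp (- integral {0..a} (\<lambda>s. mu s + zeta))"

text \<open>pi_0(a) = int_a^A k(s) exp(int_s^a (zeta + mu(l)) dl) ds; note int_s^a = - int_a^s.\<close>
definition pi0 :: "real \<Rightarrow> (real \<Rightarrow> real) \<Rightarrow> (real \<Rightarrow> real) \<Rightarrow> real \<Rightarrow> real \<Rightarrow> real" where
  "pi0 A k mu zeta a = integral {a..A} (\<lambda>s. k s * exp (- integral {a..s} (\<lambda>l. zeta + mu l)))"

definition PiF :: "real \<Rightarrow> (real \<Rightarrow> real) \<Rightarrow> (real \<Rightarrow> real) \<Rightarrow> real \<Rightarrow> real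
                    \<Rightarrow> (real \<Rightarrow> real) \<Rightarrow> real" where
  "PiF A k mu zeta c \<xi> =
     integral {0..A} (\<lambda>a. pi0 A k mu zeta a * \<xi> a) /
     integral {0..A} (\<lambda>a. a * k a * xstar mu zeta c a)"

end

theory Submission
  imports Defs
begin

lemma pc_local_bound:
  fixes f :: "real \<Rightarrow> real"
  assumes S: "finite S" and cont: "continuous_on ({a..b} - S) f"
    and left: "\<forall>s\<in>S \<inter> {a<..b}. \<exists>l. (f \<longlongrightarrow> l) (at_left s)"
    and right: "\<forall>s\<in>S \<inter> {a..<b}. \<exists>l. (f \<longlongrightarrow> l) (at_right s)"
    and x: "x \<in> {a..b::real}"
  shows "\<exists>d>0. \<exists>M. \<forall>y\<in>{a..b}. dist y x < d \<longrightarrow> \<bar>f y\<bar> \<le> M"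
proof -
  obtain d0 where d0: "d0 > 0" "\<forall>s\<in>S. s \<noteq> x \<longrightarrow> d0 \<le> dist x s"
    using finite_set_avoid[OF S, of x] by auto
  show ?thesis
  proof (cases "x \<in> S")
    case False
    then have "x \<in> {a..b} - S" using x by auto
    with cont have "\<forall>e>0. \<exists>d>0. \<forall>y\<in>{a..b} - S. dist y x < d \<longrightarrow> dist (f y) (f x) < e"
      unfolding continuous_on_iff by blast
    then obtain d1 where d1: "d1 > 0" "\<forall>y\<in>{a..b} - S. dist y x < d1 \<longrightarrow> dist (f y) (f x) < 1"
      using zero_less_one by blast
    show ?thesis
    proof (rule exI[of _ "min d0 d1"], intro conjI exI[of _ "\<bar>f x\<bar> + 1"] ballI impI)
      show "min d0 d1 > 0" using d0 d1 by auto
      fix y assume y: "y \<in> {a..b}" "dist y x < min d0 d1"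
      have "y \<notin> S"
      proof
        assume yS: "y \<in> S"
        then have "y \<noteq> x" using False by auto
        then have "d0 \<le> dist x y" using d0(2) yS by auto
        then show False using y(2) by (simp add: dist_commute)
      qed
      then have "y \<in> {a..b} - S" using y(1) by blast
      moreover have "dist y x < d1" using y(2) by simp
      ultimately have "dist (f y) (f x) < 1" using d1(2) by blast
      then show "\<bar>f y\<bar> \<le> \<bar>f x\<bar> + 1" by (simp add: dist_real_def)
    qed
  next
    case True
    obtain l1 d1 where d1: "d1 > 0" "\<forall>y. x - d1 < y \<and> y < x \<and> a \<le> y \<longrightarrow> \<bar>f y - l1\<bar> < 1"
    proof (cases "a < x")
      case True
      have "x \<in> S \<inter> {a<..b}" using True \<open>x \<in> S\<close> x by auto
      then obtain l where l: "(f \<longlongrightarrow> l) (at_left x)" using left by blast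
      have "eventually (\<lambda>y. dist (f y) l < 1) (at_left x)" using tendstoD[OF l] by auto
      then have "\<exists>b'<x. \<forall>y>b'. y < x \<longrightarrow> dist (f y) l < 1"
        using eventually_at_left[of "x - 1" x] by simp
      then obtain b' where b': "b' < x" "\<forall>y>b'. y < x \<longrightarrow> dist (f y) l < 1"
        by blast
      show ?thesis
      proof (rule that[of "x - b'" l])
        show "x - b' > 0" using b' by simp
        show "\<forall>y. x - (x - b') < y \<and> y < x \<and> a \<le> y \<longrightarrow> \<bar>f y - l\<bar> < 1"
          using b'(2) by (simp add: dist_real_def)
      qed
    next
      case False
      show ?thesis
      proof (rule that[of 1 0])
        show "\<forall>y. x - 1 < y \<and> y < x \<and> a \<le> y \<longrightarrow> \<bar>f y - 0\<bar> < 1"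
          using False by linarith
      qed simp
    qed
    obtain l2 d2 where d2: "d2 > 0" "\<forall>y. x < y \<and> y < x + d2 \<and> y \<le> b \<longrightarrow> \<bar>f y - l2\<bar> < 1"
    proof (cases "x < b")
      case True
      have "x \<in> S \<inter> {a..<b}" using True \<open>x \<in> S\<close> x by auto
      then obtain l where l: "(f \<longlongrightarrow> l) (at_right x)" using right by blast
      have "eventually (\<lambda>y. dist (f y) l < 1) (at_right x)" using tendstoD[OF l] by auto
      then have "\<exists>b'>x. \<forall>y>x. y < b' \<longrightarrow> dist (f y) l < 1"
        using eventually_at_right[of x "x + 1"] by simp
      then obtain b' where b': "b' > x" "\<forall>y>x. y < b' \<longrightarrow> dist (f y) l < 1"
        by blast
      show ?thesis
      proof (rule that[of "b' - x" l])
        show "b' - x > 0" using b' by simp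
        show "\<forall>y. x < y \<and> y < x + (b' - x) \<and> y \<le> b \<longrightarrow> \<bar>f y - l\<bar> < 1"
          using b'(2) by (simp add: dist_real_def)
      qed
    next
      case False
      show ?thesis
      proof (rule that[of 1 0])
        show "\<forall>y. x < y \<and> y < x + 1 \<and> y \<le> b \<longrightarrow> \<bar>f y - 0\<bar> < 1"
          using False by linarith
      qed simp
    qed
    show ?thesis
    proof (rule exI[of _ "min d1 d2"], intro conjI exI[of _ "\<bar>f x\<bar> + \<bar>l1\<bar> + \<bar>l2\<bar> + 1"] ballI impI)
      show "min d1 d2 > 0" using d1 d2 by auto
      fix y assume y: "y \<in> {a..b}" "dist y x < min d1 d2"
      consider "y < x" | "y = x" | "y > x" by linarith
      then show "\<bar>f y\<bar> \<le> \<bar>f x\<bar> + \<bar>l1\<bar> + \<bar>l2\<bar> + 1"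
      proof cases
        case 1
        have "x - d1 < y \<and> y < x \<and> a \<le> y" using y 1 by (auto simp: dist_real_def)
        then have "\<bar>f y - l1\<bar> < 1" using d1(2) by blast
        then show ?thesis by linarith
      next
        case 2 then show ?thesis by simp
      next
        case 3
        have "x < y \<and> y < x + d2 \<and> y \<le> b" using y 3 by (auto simp: dist_real_def)
        then have "\<bar>f y - l2\<bar> < 1" using d2(2) by blast
        then show ?thesis by linarith
      qed
    qed
  qed
qed

lemma pc_bounded:
  fixes f :: "real \<Rightarrow> real"
  assumes "pc_on a b f"
  shows "bounded (f ` {a..b})"
proof -
  obtain S where S: "finite S" "continuous_on ({a..b} - S) f"
      "\<forall>s\<in>S \<inter> {a<..b}. \<exists>l. (f \<longlongrightarrow> l) (at_left s)"
      "\<forall>s\<in>S \<inter> {a..<b}. \<exists>l. (f \<longlongrightarrow> l) (at_right s)"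
    using assms unfolding pc_on_def by blast
  have "\<forall>x\<in>{a..b}. \<exists>p. fst p > (0::real) \<and> (\<forall>y\<in>{a..b}. dist y x < fst p \<longrightarrow> \<bar>f y\<bar> \<le> snd p)"
  proof
    fix x assume "x \<in> {a..b}"
    from pc_local_bound[OF S this] obtain d M where "d > 0" "\<forall>y\<in>{a..b}. dist y x < d \<longrightarrow> \<bar>f y\<bar> \<le> M"
      by blast
    then show "\<exists>p. fst p > (0::real) \<and> (\<forall>y\<in>{a..b}. dist y x < fst p \<longrightarrow> \<bar>f y\<bar> \<le> snd p)"
      by (intro exI[of _ "(d, M)"]) simp
  qed
  from bchoice[OF this] obtain p where p: "\<forall>x\<in>{a..b}. fst (p x) > (0::real) \<and> (\<forall>y\<in>{a..b}. dist y x < fst (p x) \<longrightarrow> \<bar>f y\<bar> \<le> snd (p x))"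
    by blast
  define d where "d x = fst (p x)" for x
  define M where "M x = snd (p x)" for x
  have dM: "\<And>x. x \<in> {a..b} \<Longrightarrow> d x > 0 \<and> (\<forall>y\<in>{a..b}. dist y x < d x \<longrightarrow> \<bar>f y\<bar> \<le> M x)"
    using p unfolding d_def M_def by blast
  have "{a..b} \<subseteq> (\<Union>c\<in>{a..b}. ball c (d c))"
  proof
    fix x assume x: "x \<in> {a..b}"
    then have "x \<in> ball x (d x)" using dM[OF x] by simp
    then show "x \<in> (\<Union>c\<in>{a..b}. ball c (d c))" using x by blast
  qed
  then obtain C' where C': "C' \<subseteq> {a..b}" "finite C'" "{a..b} \<subseteq> (\<Union>c\<in>C'. ball c (d c))"
    using compactE_image[of "{a..b}" "{a..b}" "\<lambda>c. ball c (d c)"] by auto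
  have "\<forall>y\<in>{a..b}. \<bar>f y\<bar> \<le> (\<Sum>c\<in>C'. \<bar>M c\<bar>)"
  proof
    fix y assume y: "y \<in> {a..b}"
    then obtain c where c: "c \<in> C'" "y \<in> ball c (d c)" using C' by auto
    have "c \<in> {a..b}" using c C' by blast
    moreover have "dist y c < d c" using c by (simp add: dist_commute)
    ultimately have "\<bar>f y\<bar> \<le> M c" using dM y by blast
    also have "\<dots> \<le> \<bar>M c\<bar>" by simp
    also have "\<dots> \<le> (\<Sum>c\<in>C'. \<bar>M c\<bar>)"
      using c C' by (intro member_le_sum) auto
    finally show "\<bar>f y\<bar> \<le> (\<Sum>c\<in>C'. \<bar>M c\<bar>)" .
  qed
  then show ?thesis unfolding bounded_iff by auto
qed

lemma closed_lebesgue: "closed (S::real set) \<Longrightarrow> S \<in> sets lebesgue"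
  using lebesgue_closedin[of UNIV S] by simp

lemma pc_measurable:
  fixes f :: "real \<Rightarrow> real"
  assumes "pc_on a b f"
  shows "f \<in> borel_measurable (lebesgue_on {a..b})"
proof -
  obtain S where S: "finite S" "continuous_on ({a..b} - S) f"
    using assms unfolding pc_on_def by blast
  have "f \<in> borel_measurable (lebesgue_on ({a..b} - S))"
    by (rule continuous_imp_measurable_on_sets_lebesgue[OF S(2)])
       (intro sets.Diff closed_lebesgue closed_atLeastAtMost finite_imp_closed S(1))
  moreover have "{a..b} - S \<in> sets lebesgue"
    by (intro sets.Diff closed_lebesgue closed_atLeastAtMost finite_imp_closed S(1))
  ultimately have "f measurable_on ({a..b} - S)"
    using measurable_on_iff_borel_measurable[of "{a..b} - S" f] by simp
  then have "f measurable_on {a..b}"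
    by (rule measurable_on_spike_set) (rule negligible_subset[OF negligible_finite[OF S(1)]], auto)
  then show ?thesis
    using measurable_on_iff_borel_measurable[of "{a..b}" f] closed_lebesgue[OF closed_atLeastAtMost] by simp
qed

lemma pc_absint:
  fixes f :: "real \<Rightarrow> real"
  assumes "pc_on a b f"
  shows "f absolutely_integrable_on {a..b}"
proof -
  have "(\<lambda>x. f x * 1) absolutely_integrable_on {a..b}"
    by (rule absolutely_integrable_bounded_measurable_product_real)
       (use pc_measurable[OF assms] pc_bounded[OF assms] in auto)
  then show ?thesis by simp
qed

lemma pc_isCont:
  fixes f :: "real \<Rightarrow> real"
  assumes "pc_on a b f"
  obtains S where "finite S" "\<And>x. x \<in> {a<..<b} - S \<Longrightarrow> isCont f x"
proof -
  obtain S where S: "finite S" "continuous_on ({a..b} - S) f"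
    using assms unfolding pc_on_def by blast
  have "{a<..<b} - S \<subseteq> interior ({a..b} - S)"
    by (rule interior_maximal) (use S(1) in \<open>auto intro: open_Diff finite_imp_closed\<close>)
  then show thesis using continuous_on_interior[OF S(2)] by (intro that[OF S(1)]) blast
qed

lemma absint_cont_mult:
  fixes g h :: "real \<Rightarrow> real"
  assumes g: "g absolutely_integrable_on {a..b}" and h: "continuous_on {a..b} h"
  shows "(\<lambda>x. h x * g x) absolutely_integrable_on {a..b}"
  by (rule absolutely_integrable_bounded_measurable_product_real[OF _ _ _ g])
     (auto intro: continuous_imp_measurable_on_sets_lebesgue[OF h]
       compact_imp_bounded compact_continuous_image[OF h])

lemma pos_integral:
  fixes f :: "real \<Rightarrow> real"
  assumes ab: "a < b" and c: "continuous_on {a..b} f" and nn: "\<forall>x\<in>{a..b}. f x \<ge> 0"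
    and x0: "x0 \<in> {a..b}" and pos: "f x0 > 0"
  shows "integral {a..b} f > 0"
proof -
  have int: "f integrable_on {a..b}" using c by (rule integrable_continuous_interval)
  have ge: "integral {a..b} f \<ge> 0" using int nn by (intro integral_nonneg) auto
  show ?thesis
  proof (rule ccontr)
    assume "\<not> integral {a..b} f > 0"
    then have "integral {a..b} f = 0" using ge by linarith
    then have hi: "(f has_integral 0) (cbox a b)" using int by (metis has_integral_integral interval_cbox)
    have "f x0 = 0"
      by (rule has_integral_0_cbox_imp_0[of a b f, OF _ _ hi]) (use c nn x0 ab in \<open>auto simp: cbox_interval box_real\<close>)
    then show False using pos by simp
  qed
qed

lemma cont_slice:
  assumes w: "continuous_on ({0..A} \<times> {0..}) (\<lambda>(a, t). w a t)" and t: "(t::real) \<ge> 0"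
  shows "continuous_on {0..A::real} (\<lambda>a. w a t)"
proof -
  have "continuous_on {0..A} (\<lambda>a. (\<lambda>(a, t). w a t) (a, t))"
    by (rule continuous_on_compose2[OF w]) (use t in \<open>auto intro!: continuous_intros\<close>)
  then show ?thesis by simp
qed

lemma param_cont:
  fixes g :: "real \<Rightarrow> real" and w :: "real \<Rightarrow> real \<Rightarrow> real"
  assumes g: "g absolutely_integrable_on {0..A}"
    and w: "continuous_on ({0..A} \<times> {0..}) (\<lambda>(a, t). w a t)"
  shows "continuous_on {0..} (\<lambda>t. integral {0..A} (\<lambda>a. g a * w a t))"
  unfolding continuous_on_iff
proof (intro ballI allI impI)
  fix t0 e :: real assume t0: "t0 \<in> {0..}" and e: "e > 0"
  define J where "J = integral {0..A} (\<lambda>a. \<bar>g a\<bar>)"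
  have absg: "(\<lambda>a. \<bar>g a\<bar>) integrable_on {0..A}"
    using g by (simp add: absolutely_integrable_on_def)
  have J0: "J \<ge> 0" unfolding J_def using absg by (intro integral_nonneg) auto
  define \<epsilon> where "\<epsilon> = e / (J + 1)"
  have \<epsilon>: "\<epsilon> > 0" unfolding \<epsilon>_def using e J0 by simp
  have "compact ({0..A} \<times> {0..t0+1})" by (intro compact_Times compact_Icc)
  moreover have "continuous_on ({0..A} \<times> {0..t0+1}) (\<lambda>(a, t). w a t)"
    by (rule continuous_on_subset[OF w]) auto
  ultimately have "uniformly_continuous_on ({0..A} \<times> {0..t0+1}) (\<lambda>(a, t). w a t)"
    by (intro compact_uniformly_continuous)
  then obtain d where d: "d > 0" "\<forall>x\<in>{0..A} \<times> {0..t0+1}. \<forall>x'\<in>{0..A} \<times> {0..t0+1}.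
      dist x' x < d \<longrightarrow> dist ((\<lambda>(a, t). w a t) x') ((\<lambda>(a, t). w a t) x) < \<epsilon>"
    unfolding uniformly_continuous_on_def using \<epsilon> by metis
  show "\<exists>d>0. \<forall>t\<in>{0..}. dist t t0 < d \<longrightarrow>
      dist (integral {0..A} (\<lambda>a. g a * w a t)) (integral {0..A} (\<lambda>a. g a * w a t0)) < e"
  proof (rule exI[of _ "min d 1"], intro conjI ballI impI)
    show "min d 1 > 0" using d by simp
    fix t assume t: "t \<in> {0..}" "dist t t0 < min d 1"
    have pt: "\<forall>a\<in>{0..A}. \<bar>w a t - w a t0\<bar> < \<epsilon>"
    proof
      fix a assume a: "a \<in> {0..A}"
      have "(a, t) \<in> {0..A} \<times> {0..t0+1}" "(a, t0) \<in> {0..A} \<times> {0..t0+1}"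
        using a t t0 by (auto simp: dist_real_def)
      moreover have "dist (a, t) (a, t0) < d" using t by (simp add: dist_Pair_Pair)
      ultimately have "dist (w a t) (w a t0) < \<epsilon>" using d(2) by fastforce
      then show "\<bar>w a t - w a t0\<bar> < \<epsilon>" by (simp add: dist_real_def)
    qed
    have i1: "(\<lambda>a. g a * w a t) integrable_on {0..A}"
      using absint_cont_mult[OF g cont_slice[OF w, of t]] t
      by (simp add: mult.commute set_lebesgue_integral_eq_integral(1))
    have i2: "(\<lambda>a. g a * w a t0) integrable_on {0..A}"
      using absint_cont_mult[OF g cont_slice[OF w, of t0]] t0
      by (simp add: mult.commute set_lebesgue_integral_eq_integral(1))
    have "dist (integral {0..A} (\<lambda>a. g a * w a t)) (integral {0..A} (\<lambda>a. g a * w a t0))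
        = norm (integral {0..A} (\<lambda>a. g a * w a t - g a * w a t0))"
      using integral_diff[OF i1 i2] by (simp add: dist_norm)
    also have "\<dots> \<le> integral {0..A} (\<lambda>a. \<bar>g a\<bar> * \<epsilon>)"
    proof (rule integral_norm_bound_integral)
      show "(\<lambda>a. g a * w a t - g a * w a t0) integrable_on {0..A}" using i1 i2 by (rule integrable_diff)
      show "(\<lambda>a. \<bar>g a\<bar> * \<epsilon>) integrable_on {0..A}" using absg by (rule integrable_on_mult_left)
      fix a assume a: "a \<in> {0..A}"
      have "norm (g a * w a t - g a * w a t0) = \<bar>g a\<bar> * \<bar>w a t - w a t0\<bar>"
        by (simp add: abs_mult right_diff_distrib[symmetric])
      also have "\<dots> \<le> \<bar>g a\<bar> * \<epsilon>" using pt a by (intro mult_left_mono) (auto intro: less_imp_le)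
      finally show "norm (g a * w a t - g a * w a t0) \<le> \<bar>g a\<bar> * \<epsilon>" .
    qed
    also have "\<dots> = J * \<epsilon>" unfolding J_def by simp
    also have "\<dots> < e" unfolding \<epsilon>_def using e J0 by (simp add: field_simps)
    finally show "dist (integral {0..A} (\<lambda>a. g a * w a t)) (integral {0..A} (\<lambda>a. g a * w a t0)) < e" .
  qed
qed

lemma deriv_F:
  fixes f :: "real \<Rightarrow> real"
  assumes f: "continuous_on {0..} f" and t: "t \<ge> 0"
  shows "((\<lambda>t. integral {0..t} f) has_real_derivative f t) (at t within {0..})"
proof -
  have "((\<lambda>t. integral {0..t} f) has_real_derivative f t) (at t within {0..t+1})"
    by (rule integral_has_real_derivative) (use t in \<open>auto intro: continuous_on_subset[OF f]\<close>)
  moreover have "at t within {0..t+1} = at t within {0..}"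
    by (rule at_within_nhd[of _ "{t - 1<..<t + 1}"]) auto
  ultimately show ?thesis by simp
qed

lemma absint_cont_integrable:
  fixes g h :: "real \<Rightarrow> real"
  assumes g: "g absolutely_integrable_on {a..b}" and h: "continuous_on {a..b} h"
  shows "(\<lambda>x. g x * h x) integrable_on {a..b}"
  using absint_cont_mult[OF g h] by (simp add: mult.commute set_lebesgue_integral_eq_integral(1))

lemma conservation:
  fixes kt B :: "real \<Rightarrow> real"
  assumes A: "A > 0" and kt: "kt absolutely_integrable_on {0..A}"
    and S: "finite S" and ktc: "\<And>x. x \<in> {0<..<A} - S \<Longrightarrow> isCont kt x"
    and B: "continuous_on UNIV B"
    and ren: "\<And>t. t \<ge> 0 \<Longrightarrow> B t = integral {0..A} (\<lambda>a. kt a * B (t - a))"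
    and one: "integral {0..A} kt = 1"
    and t: "t \<ge> 0"
  shows "integral {0..A} (\<lambda>a. integral {a..A} kt * B (t - a))
       = integral {0..A} (\<lambda>a. integral {a..A} kt * B (- a))"
proof -
  have kti: "kt integrable_on {0..A}" using kt by (simp add: absolutely_integrable_on_def)
  have absk: "(\<lambda>a. \<bar>kt a\<bar>) integrable_on {0..A}" using kt by (simp add: absolutely_integrable_on_def)
  define K where "K a = 1 - integral {0..a} kt" for a
  have K_eq: "integral {a..A} kt = K a" if "a \<in> {0..A}" for a
    using Henstock_Kurzweil_Integration.integral_combine[where a=0 and c=a and b=A and f=kt] that kti one unfolding K_def by auto
  have K0: "K 0 = 1" unfolding K_def by simp
  have KA: "K A = 0" unfolding K_def using one by simp
  have Kc: "continuous_on {0..A} K"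
    unfolding K_def by (intro continuous_intros indefinite_integral_continuous_1 kti)
  have Kd: "(K has_vector_derivative - kt x) (at x)" if x: "x \<in> {0<..<A} - S" for x
  proof -
    have "((\<lambda>u. integral {0..u} kt) has_vector_derivative kt x) (at x within ({0..A} - {}))"
      by (rule integral_has_vector_derivative_continuous_at[OF kti])
         (use x ktc[OF x] in \<open>auto intro: continuous_at_imp_continuous_within\<close>)
    then have "((\<lambda>u. integral {0..u} kt) has_vector_derivative kt x) (at x)"
      using x at_within_Icc_at[of 0 x A] by simp
    then have "((\<lambda>u. 1 - integral {0..u} kt) has_vector_derivative 0 - kt x) (at x)"
      by (intro derivative_intros)
    then show ?thesis unfolding K_def by simp
  qed
  define C where "C s = integral {-A-2..s} B" for s
  have Cd: "(C has_real_derivative B s) (at s)" if s: "s > -A-2" for s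
  proof -
    have "(C has_real_derivative B s) (at s within {-A-2..s+1})"
      unfolding C_def
      by (rule integral_has_real_derivative) (use s in \<open>auto intro: continuous_on_subset[OF B]\<close>)
    then show ?thesis using at_within_Icc_at[of "-A-2" s "s+1"] s by simp
  qed
  have Cc: "continuous_on {0..A} (\<lambda>a. C (q - a))" if q: "q > -2" for q
  proof (intro continuous_at_imp_continuous_on ballI)
    fix a assume a: "a \<in> {0..A}"
    have "isCont C (q - a)" using Cd[of "q - a"] a q by (auto intro: DERIV_isCont)
    moreover have c1: "isCont (\<lambda>a. q - a) a" by (intro continuous_intros)
    ultimately have "isCont (C \<circ> (\<lambda>a. q - a)) a" using continuous_at_compose[OF c1, of C] by simp
    then show "isCont (\<lambda>a. C (q - a)) a" by (simp add: o_def)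
  qed
  have Bc: "continuous_on {0..A} (\<lambda>a. B (q - a))" for q
    by (rule continuous_on_compose2[OF B]) (auto intro!: continuous_intros)
  define R where "R q = integral {0..A} (\<lambda>a. kt a * C (q - a))" for q
  have Rint: "(\<lambda>a. kt a * C (q - a)) integrable_on {0..A}" if "q > -2" for q
    by (rule absint_cont_integrable[OF kt Cc[OF that]])
  have Bint: "(\<lambda>a. kt a * B (q - a)) integrable_on {0..A}" for q
    by (rule absint_cont_integrable[OF kt Bc])
  have step1: "integral {0..A} (\<lambda>a. K a * B (p - a)) = C p - R p" if p: "p \<ge> 0" for p
  proof -
    have "((\<lambda>x. - B (p - x) * K x) has_integral (R p - C p)) {0..A}"
    proof (rule integration_by_parts_interior_strong[where prod="(*)" and s=S and a=0 and b=A
          and f="\<lambda>a. C (p - a)" and g=K and f'="\<lambda>a. - B (p - a)" and g'="\<lambda>a. - kt a"])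
      show "bounded_bilinear ((*) :: real \<Rightarrow> real \<Rightarrow> real)" by (rule bounded_bilinear_mult)
      show "finite S" by (rule S)
      show "0 \<le> A" using A by simp
      show "continuous_on {0..A} (\<lambda>a. C (p - a))" using Cc[of p] p by simp
      show "continuous_on {0..A} K" by (rule Kc)
      show "(K has_vector_derivative - kt x) (at x)" if "x \<in> {0<..<A} - S" for x
        using Kd[OF that] .
      show "((\<lambda>a. C (p - a)) has_vector_derivative - B (p - x)) (at x)" if x: "x \<in> {0<..<A} - S" for x
      proof -
        have "p - x > - A - 2" using x p A by auto
        then have "((\<lambda>a. C (p - a)) has_real_derivative B (p - x) * (- 1)) (at x)"
          by (rule DERIV_chain2[OF Cd]) (auto intro!: derivative_eq_intros)
        then show ?thesis by (simp add: has_real_derivative_iff_has_vector_derivative)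
      qed
      have "((\<lambda>a. kt a * C (p - a)) has_integral R p) {0..A}"
        unfolding R_def using Rint[of p] p by (simp add: has_integral_integral)
      then have "((\<lambda>a. - (kt a * C (p - a))) has_integral - R p) {0..A}"
        by (rule has_integral_neg)
      moreover have "(\<lambda>x. C (p - x) * - kt x) = (\<lambda>a. - (kt a * C (p - a)))"
        by (simp add: fun_eq_iff)
      ultimately have "((\<lambda>x. C (p - x) * - kt x) has_integral - R p) {0..A}" by simp
      then show "((\<lambda>x. C (p - x) * - kt x) has_integral
          (C (p - A) * K A - C (p - 0) * K 0 - (R p - C p))) {0..A}"
        using K0 KA by simp
    qed
    then have "((\<lambda>x. - (- B (p - x) * K x)) has_integral - (R p - C p)) {0..A}"
      by (rule has_integral_neg)
    then have "((\<lambda>x. K x * B (p - x)) has_integral (C p - R p)) {0..A}"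
      by (simp add: mult.commute)
    then show ?thesis by (rule integral_unique)
  qed
  have step2: "(R has_real_derivative integral {0..A} (\<lambda>a. kt a * B (p - a))) (at p)"
    if p: "p \<ge> 0" for p
  proof -
    define D where "D = integral {0..A} (\<lambda>a. kt a * B (p - a))"
    define J where "J = integral {0..A} (\<lambda>a. \<bar>kt a\<bar>)"
    have J0: "J \<ge> 0" unfolding J_def using absk by (intro integral_nonneg) auto
    have "((\<lambda>y. (R y - R p) / (y - p)) \<longlongrightarrow> D) (at p)"
      unfolding LIM_eq
    proof (intro allI impI)
      fix r :: real assume r: "r > 0"
      define \<epsilon> where "\<epsilon> = r / (2 * (J + 1))"
      have \<epsilon>: "\<epsilon> > 0" unfolding \<epsilon>_def using r J0 by simp
      have "uniformly_continuous_on {-A-1..p+1} B"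
        by (intro compact_uniformly_continuous continuous_on_subset[OF B]) auto
      then obtain d where d: "d > 0" "\<forall>x\<in>{-A-1..p+1}. \<forall>x'\<in>{-A-1..p+1}.
          dist x' x < d \<longrightarrow> dist (B x') (B x) < \<epsilon>"
        unfolding uniformly_continuous_on_def using \<epsilon> by metis
      show "\<exists>s>0. \<forall>y. y \<noteq> p \<and> norm (y - p) < s \<longrightarrow> norm ((R y - R p) / (y - p) - D) < r"
      proof (rule exI[of _ "min d 1"], intro conjI allI impI)
        show "min d 1 > 0" using d by simp
        fix y assume y: "y \<noteq> p \<and> norm (y - p) < min d 1"
        have yd: "\<bar>y - p\<bar> < d" "\<bar>y - p\<bar> < 1" "y \<noteq> p" using y by auto
        have pw: "\<bar>C (y - a) - C (p - a) - (y - p) * B (p - a)\<bar> \<le> \<bar>y - p\<bar> * \<epsilon>"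
          if a: "a \<in> {0..A}" for a
        proof (cases "y > p")
          case True
          have dd: "DERIV C x :> B x" if "p - a \<le> x" "x \<le> y - a" for x
            using that a p A by (intro Cd) auto
          obtain z where z: "p - a < z" "z < y - a" "C (y - a) - C (p - a) = ((y - a) - (p - a)) * B z"
            using MVT2[of "p - a" "y - a" C B, OF _ dd] True by auto
          have "z \<in> {-A-1..p+1}" "p - a \<in> {-A-1..p+1}" using z a p yd by auto
          moreover have "dist z (p - a) < d" using z yd by (auto simp: dist_real_def)
          ultimately have "dist (B z) (B (p - a)) < \<epsilon>" using d(2) by blast
          then have "\<bar>B z - B (p - a)\<bar> < \<epsilon>" by (simp add: dist_real_def)
          moreover have "C (y - a) - C (p - a) - (y - p) * B (p - a) = (y - p) * (B z - B (p - a))"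
            using z(3) by (simp add: algebra_simps)
          ultimately show ?thesis by (simp add: abs_mult mult_left_mono less_imp_le)
        next
          case False
          then have yp: "y < p" using yd by simp
          have dd: "DERIV C x :> B x" if "y - a \<le> x" "x \<le> p - a" for x
            using that a p A yd by (intro Cd) auto
          obtain z where z: "y - a < z" "z < p - a" "C (p - a) - C (y - a) = ((p - a) - (y - a)) * B z"
            using MVT2[of "y - a" "p - a" C B, OF _ dd] yp by auto
          have "z \<in> {-A-1..p+1}" "p - a \<in> {-A-1..p+1}" using z a p yd by auto
          moreover have "dist z (p - a) < d" using z yd by (auto simp: dist_real_def)
          ultimately have "dist (B z) (B (p - a)) < \<epsilon>" using d(2) by blast
          then have "\<bar>B z - B (p - a)\<bar> < \<epsilon>" by (simp add: dist_real_def)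
          moreover have "C (y - a) - C (p - a) - (y - p) * B (p - a) = (p - y) * (B (p - a) - B z)"
            using z(3) by (simp add: algebra_simps)
          ultimately show ?thesis using yp by (simp add: abs_mult abs_minus_commute mult_left_mono less_imp_le)
        qed
        have y2: "y > -2" "p > -2" using yd p by auto
        have "R y - R p - (y - p) * D
            = integral {0..A} (\<lambda>a. kt a * (C (y - a) - C (p - a) - (y - p) * B (p - a)))"
        proof -
          have "integral {0..A} (\<lambda>a. kt a * (C (y - a) - C (p - a) - (y - p) * B (p - a)))
              = integral {0..A} (\<lambda>a. kt a * C (y - a) - kt a * C (p - a) - (y - p) * (kt a * B (p - a)))"
            by (simp add: algebra_simps)
          also have "\<dots> = R y - R p - (y - p) * D"
          proof -
            have "((\<lambda>a. kt a * C (y - a) - kt a * C (p - a) - (y - p) * (kt a * B (p - a)))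
                has_integral (R y - R p - (y - p) * D)) {0..A}"
              unfolding R_def D_def
              by (intro has_integral_diff has_integral_mult_right integrable_integral
                  Rint[OF y2(1)] Rint[OF y2(2)] Bint[of p])
            then show ?thesis by (rule integral_unique)
          qed
          finally show ?thesis by simp
        qed
        also have "\<bar>\<dots>\<bar> \<le> integral {0..A} (\<lambda>a. \<bar>kt a\<bar> * (\<bar>y - p\<bar> * \<epsilon>))"
        proof -
          have "norm (integral {0..A} (\<lambda>a. kt a * (C (y - a) - C (p - a) - (y - p) * B (p - a))))
              \<le> integral {0..A} (\<lambda>a. \<bar>kt a\<bar> * (\<bar>y - p\<bar> * \<epsilon>))"
          proof (rule integral_norm_bound_integral)
            show "(\<lambda>a. kt a * (C (y - a) - C (p - a) - (y - p) * B (p - a))) integrable_on {0..A}"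
            proof -
              have "(\<lambda>a. kt a * C (y - a) - kt a * C (p - a) - (y - p) * (kt a * B (p - a))) integrable_on {0..A}"
                by (intro integrable_diff integrable_on_mult_right Rint[OF y2(1)] Rint[OF y2(2)] Bint[of p])
              then show ?thesis by (simp add: algebra_simps)
            qed
            show "(\<lambda>a. \<bar>kt a\<bar> * (\<bar>y - p\<bar> * \<epsilon>)) integrable_on {0..A}"
              using absk by (rule integrable_on_mult_left)
            fix a assume a: "a \<in> {0..A}"
            show "norm (kt a * (C (y - a) - C (p - a) - (y - p) * B (p - a))) \<le> \<bar>kt a\<bar> * (\<bar>y - p\<bar> * \<epsilon>)"
              using pw[OF a] by (simp add: abs_mult mult_left_mono)
          qed
          then show ?thesis by simp
        qed
        also have "\<dots> = \<bar>y - p\<bar> * \<epsilon> * J" unfolding J_def by simp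
        finally have bnd: "\<bar>R y - R p - (y - p) * D\<bar> \<le> \<bar>y - p\<bar> * \<epsilon> * J" .
        have "norm ((R y - R p) / (y - p) - D) = \<bar>R y - R p - (y - p) * D\<bar> / \<bar>y - p\<bar>"
          using yd(3) by (simp add: field_simps)
        also have "\<dots> \<le> \<epsilon> * J" using bnd yd(3) by (simp add: divide_le_eq mult_ac)
        also have "\<dots> < r" unfolding \<epsilon>_def using r J0
          by (simp add: field_simps) (metis add_nonneg_pos mult_nonneg_nonneg less_imp_le mult_pos_pos zero_less_numeral)
        finally show "norm ((R y - R p) / (y - p) - D) < r" .
      qed
    qed
    then show ?thesis unfolding D_def by (simp add: has_field_derivative_iff)
  qed
  have "\<exists>c. \<forall>x\<in>{0..}. C x - R x = c"
  proof (rule has_field_derivative_zero_constant)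
    show "convex {0::real..}" by (rule convex_real_interval)
    fix x :: real assume x: "x \<in> {0..}"
    have "((\<lambda>x. C x - R x) has_real_derivative B x - integral {0..A} (\<lambda>a. kt a * B (x - a))) (at x)"
      using x A Cd[of x] step2[of x] by (intro DERIV_diff) auto
    then have "((\<lambda>x. C x - R x) has_real_derivative 0) (at x)" using ren[of x] x by simp
    then show "((\<lambda>x. C x - R x) has_real_derivative 0) (at x within {0..})"
      by (rule has_field_derivative_at_within)
  qed
  then obtain c where c: "\<forall>x\<in>{0..}. C x - R x = c" by blast
  have "integral {0..A} (\<lambda>a. integral {a..A} kt * B (t - a)) = integral {0..A} (\<lambda>a. K a * B (t - a))"
    by (rule integral_cong) (simp add: K_eq)
  also have "\<dots> = C t - R t" using step1 t by simp
  also have "\<dots> = C 0 - R 0" using c t by simp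
  also have "\<dots> = integral {0..A} (\<lambda>a. K a * B (0 - a))" using step1[of 0] by simp
  also have "\<dots> = integral {0..A} (\<lambda>a. integral {a..A} kt * B (- a))"
    by (rule integral_cong) (simp add: K_eq)
  finally show ?thesis .
qed

lemma by_parts_K:
  fixes kt :: "real \<Rightarrow> real"
  assumes A: "A > 0" and kt: "kt absolutely_integrable_on {0..A}"
    and S: "finite S" and ktc: "\<And>x. x \<in> {0<..<A} - S \<Longrightarrow> isCont kt x"
    and one: "integral {0..A} kt = 1"
  shows "integral {0..A} (\<lambda>a. a * kt a) = integral {0..A} (\<lambda>a. integral {a..A} kt)"
proof -
  have kti: "kt integrable_on {0..A}" using kt by (simp add: absolutely_integrable_on_def)
  define K where "K a = 1 - integral {0..a} kt" for a
  have K_eq: "integral {a..A} kt = K a" if "a \<in> {0..A}" for a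
    using Henstock_Kurzweil_Integration.integral_combine[where a=0 and c=a and b=A and f=kt]
      that kti one unfolding K_def by auto
  have K0: "K 0 = 1" unfolding K_def by simp
  have KA: "K A = 0" unfolding K_def using one by simp
  have Kc: "continuous_on {0..A} K"
    unfolding K_def by (intro continuous_intros indefinite_integral_continuous_1 kti)
  have Kd: "(K has_vector_derivative - kt x) (at x)" if x: "x \<in> {0<..<A} - S" for x
  proof -
    have "((\<lambda>u. integral {0..u} kt) has_vector_derivative kt x) (at x within ({0..A} - {}))"
      by (rule integral_has_vector_derivative_continuous_at[OF kti])
         (use x ktc[OF x] in \<open>auto intro: continuous_at_imp_continuous_within\<close>)
    then have "((\<lambda>u. integral {0..u} kt) has_vector_derivative kt x) (at x)"
      using x at_within_Icc_at[of 0 x A] by simp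
    then have "((\<lambda>u. 1 - integral {0..u} kt) has_vector_derivative 0 - kt x) (at x)"
      by (intro derivative_intros)
    then show ?thesis unfolding K_def by simp
  qed
  define y where "y = integral {0..A} (\<lambda>a. a * kt a)"
  have yint: "((\<lambda>a. a * kt a) has_integral y) {0..A}"
  proof -
    have "(\<lambda>a. kt a * a) integrable_on {0..A}"
      by (rule absint_cont_integrable[OF kt]) (intro continuous_intros)
    then show ?thesis unfolding y_def by (simp add: mult.commute has_integral_integral)
  qed
  have "((\<lambda>x. 1 * K x) has_integral y) {0..A}"
  proof (rule integration_by_parts_interior_strong[where prod="(*)" and s=S and a=0 and b=A
        and f="\<lambda>a. a" and g=K and f'="\<lambda>a. 1" and g'="\<lambda>a. - kt a"])
    show "bounded_bilinear ((*) :: real \<Rightarrow> real \<Rightarrow> real)" by (rule bounded_bilinear_mult)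
    show "finite S" by (rule S)
    show "0 \<le> A" using A by simp
    show "continuous_on {0..A} (\<lambda>a::real. a)" by (intro continuous_intros)
    show "continuous_on {0..A} K" by (rule Kc)
    show "(K has_vector_derivative - kt x) (at x)" if "x \<in> {0<..<A} - S" for x
      using Kd[OF that] .
    show "((\<lambda>a. a) has_vector_derivative 1) (at x)" for x :: real
      by (rule has_vector_derivative_id)
    have "((\<lambda>a. - (a * kt a)) has_integral - y) {0..A}" using yint by (rule has_integral_neg)
    then show "((\<lambda>x. x * - kt x) has_integral (A * K A - 0 * K 0 - y)) {0..A}"
      using KA by simp
  qed
  then have "integral {0..A} K = y" by (simp add: integral_unique)
  moreover have "integral {0..A} (\<lambda>a. integral {a..A} kt) = integral {0..A} K"
    by (rule integral_cong) (simp add: K_eq)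
  ultimately show ?thesis unfolding y_def by simp
qed

lemma generic:
  fixes A zeta c :: real and mu k u G :: "real \<Rightarrow> real" and x :: "real \<Rightarrow> real \<Rightarrow> real"
  assumes A: "A > 0" and pcm: "pc_on 0 A mu" and pck: "pc_on 0 A k"
    and kn: "\<forall>a\<in>{0..A}. k a \<ge> 0"
    and zeta: "integral {0..A} (\<lambda>a. k a * exp (- integral {0..a} (\<lambda>s. mu s + zeta))) = 1"
    and c: "c > 0" and u: "continuous_on {0..} u" and G: "continuous_on {0..} G"
    and xc: "continuous_on ({0..A} \<times> {0..}) (\<lambda>(a, t). x a t)"
    and xpos: "\<forall>t\<ge>0. \<forall>a\<in>{0..A}. x a t > 0"
    and bc: "\<forall>t\<ge>0. x 0 t = integral {0..A} (\<lambda>a. k a * x a t)"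
    and char: "\<forall>a t h. 0 \<le> a \<longrightarrow> 0 \<le> t \<longrightarrow> 0 \<le> h \<longrightarrow> a + h \<le> A \<longrightarrow>
        x (a + h) (t + h) = x a t * exp (- integral {0..h} (\<lambda>s. mu (a + s) + u (t + s) + G (t + s)))"
  shows "\<exists>psi. (\<forall>s\<ge>-A. psi s > -1) \<and> (\<forall>t\<ge>0. PiF A k mu zeta c (\<lambda>a. x a t) > 0) \<and>
     (\<forall>t\<ge>0. \<forall>a\<in>{0..A}. psi (t - a) = x a t / (xstar mu zeta c a * PiF A k mu zeta c (\<lambda>a. x a t)) - 1) \<and>
     (\<forall>t\<ge>0. ((\<lambda>t. ln (PiF A k mu zeta c (\<lambda>a. x a t))) has_real_derivative (zeta - u t - G t))
         (at t within {0..})) \<and>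
     (\<forall>t\<ge>0. ((\<lambda>a. ktilde k mu zeta a * psi (t - a)) has_integral psi t) {0..A})"
proof -
  have mi: "mu integrable_on {0..A}" using pc_absint[OF pcm] by (simp add: absolutely_integrable_on_def)
  have kabs: "k absolutely_integrable_on {0..A}" by (rule pc_absint[OF pck])
  define M where "M a = integral {0..a} mu" for a
  define L where "L a = zeta * a + M a" for a
  define l where "l a = exp (- L a)" for a
  have Mc: "continuous_on {0..A} M" unfolding M_def by (rule indefinite_integral_continuous_1[OF mi])
  have Lc: "continuous_on {0..A} L" unfolding L_def by (intro continuous_intros Mc)
  have lc: "continuous_on {0..A} l" unfolding l_def by (intro continuous_intros Lc)
  have lpos: "l a > 0" for a unfolding l_def by simp
  have M0: "M 0 = 0" unfolding M_def by simp
  have L0: "L 0 = 0" unfolding L_def using M0 by simp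
  have mi_sub: "mu integrable_on {a..b}" if "0 \<le> a" "b \<le> A" for a b
    by (rule integrable_on_subinterval[OF mi]) (use that in auto)
  have I1: "integral {0..a} (\<lambda>s. mu s + zeta) = L a" if a: "a \<in> {0..A}" for a
  proof -
    have "integral {0..a} (\<lambda>s. mu s + zeta) = integral {0..a} mu + integral {0..a} (\<lambda>s. zeta)"
      by (rule integral_add) (use mi_sub[of 0 a] a in auto)
    then show ?thesis unfolding L_def M_def using a by simp
  qed
  have I2: "integral {0..a} (\<lambda>s. zeta + mu s) = L a" if a: "a \<in> {0..A}" for a
    using I1[OF a] by (simp add: add.commute)
  have I3: "integral {a..s} (\<lambda>l. zeta + mu l) = L s - L a" if as: "0 \<le> a" "a \<le> s" "s \<le> A" for a s
  proof -
    have "integral {a..s} (\<lambda>l. zeta + mu l) = integral {a..s} (\<lambda>l. zeta) + integral {a..s} mu"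
      by (rule integral_add) (use mi_sub[of a s] as in auto)
    moreover have "M s = M a + integral {a..s} mu"
      unfolding M_def
      using Henstock_Kurzweil_Integration.integral_combine[where a=0 and c=a and b=s and f=mu]
        mi_sub[of 0 s] as by auto
    ultimately show ?thesis unfolding L_def using as by (simp add: algebra_simps)
  qed
  have xstar_eq: "xstar mu zeta c a = c * l a" if "a \<in> {0..A}" for a
    unfolding xstar_def l_def using I2[OF that] by simp
  define kt where "kt a = k a * l a" for a
  have ktilde_eq: "ktilde k mu zeta a = kt a" if "a \<in> {0..A}" for a
    unfolding ktilde_def kt_def l_def using I1[OF that] by simp
  have ktabs: "kt absolutely_integrable_on {0..A}"
    using absint_cont_mult[OF kabs lc] unfolding kt_def by (simp add: mult.commute)
  have kti: "kt integrable_on {0..A}" using ktabs by (simp add: absolutely_integrable_on_def)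
  have ktn: "kt a \<ge> 0" if "a \<in> {0..A}" for a
    unfolding kt_def using kn that lpos[of a] by simp
  have kt1: "integral {0..A} kt = 1"
  proof -
    have "integral {0..A} kt = integral {0..A} (\<lambda>a. k a * exp (- integral {0..a} (\<lambda>s. mu s + zeta)))"
      by (rule integral_cong) (simp add: kt_def l_def I1)
    then show ?thesis using zeta by simp
  qed
  obtain S where S: "finite S" and kc: "\<And>x. x \<in> {0<..<A} - S \<Longrightarrow> isCont k x"
    using pc_isCont[OF pck] by blast
  have ktc: "isCont kt x" if x: "x \<in> {0<..<A} - S" for x
  proof -
    have "isCont l x" using continuous_on_interior[OF lc, of x] x by simp
    then show ?thesis unfolding kt_def using kc[OF x] by (intro continuous_intros)
  qed
  define w where "w s = u s + G s" for s
  have wc: "continuous_on {0..} w" unfolding w_def by (intro continuous_intros u G)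
  define F where "F t = integral {0..t} w" for t
  have Fd: "(F has_real_derivative w t) (at t within {0..})" if "t \<ge> 0" for t
    unfolding F_def by (rule deriv_F[OF wc that])
  have Fc: "continuous_on {0..} F"
    using Fd by (auto intro!: DERIV_continuous continuous_on_eq_continuous_within[THEN iffD2])
  have F0: "F 0 = 0" unfolding F_def by simp
  have wi_sub: "w integrable_on {a..b}" if "0 \<le> a" for a b
    by (rule integrable_continuous_interval) (use that in \<open>auto intro: continuous_on_subset[OF wc]\<close>)
  have charI: "integral {0..h} (\<lambda>s. mu (a + s) + u (t + s) + G (t + s)) = (M (a + h) - M a) + (F (t + h) - F t)"
    if h: "0 \<le> a" "0 \<le> t" "0 \<le> h" "a + h \<le> A" for a t h
  proof -
    define f where "f r = mu r + w (r + (t - a))" for r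
    have "(\<lambda>s. mu (a + s) + u (t + s) + G (t + s)) = f \<circ> ((+) a)"
      unfolding f_def w_def by (auto simp: fun_eq_iff algebra_simps)
    then have "integral {0..h} (\<lambda>s. mu (a + s) + u (t + s) + G (t + s)) = integral {0 + a..h + a} f"
      using integral_shift_Icc_real[of 0 h f a] by simp
    also have "\<dots> = integral {a..a+h} mu + integral {a..a+h} (\<lambda>r. w (r + (t - a)))"
    proof -
      have "(\<lambda>r. w (r + (t - a))) integrable_on {a..a+h}"
      proof (rule integrable_continuous_interval)
        show "continuous_on {a..a + h} (\<lambda>r. w (r + (t - a)))"
          by (rule continuous_on_compose2[OF wc]) (use h in \<open>auto intro!: continuous_intros\<close>)
      qed
      then show ?thesis unfolding f_def using mi_sub[of a "a+h"] h
        by (simp add: integral_add add.commute)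
    qed
    also have "integral {a..a+h} mu = M (a + h) - M a"
      unfolding M_def
      using Henstock_Kurzweil_Integration.integral_combine[where a=0 and c=a and b="a+h" and f=mu]
        mi_sub[of 0 "a+h"] h by auto
    also have "integral {a..a+h} (\<lambda>r. w (r + (t - a))) = integral {t..t+h} w"
    proof -
      have "(\<lambda>r. w (r + (t - a))) = w \<circ> ((+) (t - a))" by (auto simp: fun_eq_iff algebra_simps)
      then show ?thesis using integral_shift_Icc_real[of a "a+h" w "t - a"] by (simp add: algebra_simps)
    qed
    also have "integral {t..t+h} w = F (t + h) - F t"
      unfolding F_def
      using Henstock_Kurzweil_Integration.integral_combine[where a=0 and c=t and b="t+h" and f=w]
        wi_sub[of 0 "t+h"] h by auto
    finally show ?thesis .
  qed
  define z where "z a t = x a t * exp (F t - zeta * t + L a)" for a t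
  have zinv: "z (a + h) (t + h) = z a t"
    if h: "0 \<le> a" "0 \<le> t" "0 \<le> h" "a + h \<le> A" for a t h
  proof -
    have "z (a + h) (t + h) = x a t * (exp (- ((M (a + h) - M a) + (F (t + h) - F t)))
        * exp (F (t + h) - zeta * (t + h) + L (a + h)))"
      unfolding z_def using char h charI[OF h] by simp
    also have "exp (- ((M (a + h) - M a) + (F (t + h) - F t))) * exp (F (t + h) - zeta * (t + h) + L (a + h))
        = exp (F t - zeta * t + L a)"
      unfolding L_def by (simp add: exp_add[symmetric] algebra_simps)
    finally show ?thesis unfolding z_def by simp
  qed
  have zc: "continuous_on ({0..A} \<times> {0..}) (\<lambda>(a, t). z a t)"
  proof -
    have c1: "continuous_on ({0..A} \<times> {0..}) (\<lambda>p. F (snd p))"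
      by (rule continuous_on_compose2[OF Fc]) (auto intro!: continuous_intros)
    have c2: "continuous_on ({0..A} \<times> {0..}) (\<lambda>p. L (fst p))"
      by (rule continuous_on_compose2[OF Lc]) (auto intro!: continuous_intros)
    have c3: "continuous_on ({0..A} \<times> {0..}) (\<lambda>p. x (fst p) (snd p))"
      using xc by (simp add: case_prod_beta')
    have "continuous_on ({0..A} \<times> {0..}) (\<lambda>p. x (fst p) (snd p) * exp (F (snd p) - zeta * snd p + L (fst p)))"
      by (intro continuous_intros c1 c2 c3)
    then show ?thesis unfolding z_def by (simp add: case_prod_beta')
  qed
  have zpos: "z a t > 0" if "a \<in> {0..A}" "t \<ge> 0" for a t
    unfolding z_def using xpos that by simp
  define B where "B s = z (min A (max 0 (- s))) (max 0 s)" for s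
  have Bc: "continuous_on UNIV B"
  proof -
    have "continuous_on UNIV ((\<lambda>(a, t). z a t) \<circ> (\<lambda>s. (min A (max 0 (- s)), max 0 s)))"
    proof (rule continuous_on_compose)
      show "continuous_on UNIV (\<lambda>s. (min A (max 0 (- s)), max 0 (s::real)))"
        by (intro continuous_intros)
      show "continuous_on ((\<lambda>s. (min A (max 0 (- s)), max 0 s)) ` UNIV) (\<lambda>(a, t). z a t)"
        by (rule continuous_on_subset[OF zc]) (use A in auto)
    qed
    then show ?thesis unfolding B_def o_def by simp
  qed
  have Bpos: "B s > 0" for s
    unfolding B_def using A by (intro zpos) auto
  have zB: "z a t = B (t - a)" if a: "a \<in> {0..A}" and t: "t \<ge> 0" for a t
  proof (cases "a \<le> t")
    case True
    have "z (0 + a) ((t - a) + a) = z 0 (t - a)" by (rule zinv) (use a True in auto)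
    moreover have "B (t - a) = z 0 (t - a)" unfolding B_def using True A by simp
    ultimately show ?thesis by simp
  next
    case False
    have "z ((a - t) + t) (0 + t) = z (a - t) 0" by (rule zinv) (use a t False in auto)
    moreover have "min A (a - t) = a - t" using a t by simp
    then have "B (t - a) = z (a - t) 0" unfolding B_def using False a by simp
    ultimately show ?thesis by simp
  qed
  have x_eq: "x a t = B (t - a) * l a * exp (zeta * t - F t)" if a: "a \<in> {0..A}" and t: "t \<ge> 0" for a t
  proof -
    have "B (t - a) = x a t * exp (F t - zeta * t + L a)" using zB[OF a t] unfolding z_def by simp
    then have "B (t - a) * l a * exp (zeta * t - F t)
        = x a t * (exp (F t - zeta * t + L a) * exp (- L a) * exp (zeta * t - F t))"
      unfolding l_def by simp
    also have "exp (F t - zeta * t + L a) * exp (- L a) * exp (zeta * t - F t) = 1"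
      by (simp add: exp_add[symmetric])
    finally show ?thesis by simp
  qed
  have Bren: "B t = integral {0..A} (\<lambda>a. kt a * B (t - a))" if t: "t \<ge> 0" for t
  proof -
    have "B t = z 0 t" using zB[of 0 t] t A by simp
    also have "\<dots> = x 0 t * exp (F t - zeta * t)" unfolding z_def using L0 by simp
    also have "x 0 t = integral {0..A} (\<lambda>a. k a * x a t)" using bc t by simp
    also have "\<dots> = integral {0..A} (\<lambda>a. exp (zeta * t - F t) * (kt a * B (t - a)))"
      by (rule integral_cong) (use t in \<open>simp add: x_eq kt_def\<close>)
    also have "\<dots> = exp (zeta * t - F t) * integral {0..A} (\<lambda>a. kt a * B (t - a))"
      by simp
    finally show ?thesis by (simp add: exp_add[symmetric])
  qed
  define K where "K a = integral {a..A} kt" for a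
  have cons: "integral {0..A} (\<lambda>a. K a * B (t - a)) = integral {0..A} (\<lambda>a. K a * B (- a))"
    if t: "t \<ge> 0" for t
    unfolding K_def by (rule conservation[OF A ktabs S ktc Bc Bren kt1 t])
  have K_eq: "K a = 1 - integral {0..a} kt" if "a \<in> {0..A}" for a
    using Henstock_Kurzweil_Integration.integral_combine[where a=0 and c=a and b=A and f=kt]
      that kti kt1 unfolding K_def by auto
  have Kc: "continuous_on {0..A} K"
  proof -
    have "continuous_on {0..A} (\<lambda>a. 1 - integral {0..a} kt)"
      by (intro continuous_intros indefinite_integral_continuous_1 kti)
    then show ?thesis by (rule continuous_on_eq) (use K_eq in auto)
  qed
  have Knn: "K a \<ge> 0" if a: "a \<in> {0..A}" for a
    unfolding K_def
    by (rule integral_nonneg) (use a ktn integrable_on_subinterval[OF kti, of a A] in auto)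
  have K0: "K 0 = 1" unfolding K_def using kt1 by simp
  have pi0_eq: "pi0 A k mu zeta a = exp (L a) * K a" if a: "a \<in> {0..A}" for a
  proof -
    have "pi0 A k mu zeta a = integral {a..A} (\<lambda>s. exp (L a) * kt s)"
      unfolding pi0_def
    proof (rule integral_cong)
      fix s assume s: "s \<in> {a..A}"
      have "integral {a..s} (\<lambda>l. zeta + mu l) = L s - L a" using I3[of a s] a s by auto
      then have "k s * exp (- integral {a..s} (\<lambda>l. zeta + mu l)) = k s * exp (L a - L s)" by simp
      also have "\<dots> = exp (L a) * kt s"
        unfolding kt_def l_def by (simp add: exp_diff exp_minus field_simps)
      finally show "k s * exp (- integral {a..s} (\<lambda>l. zeta + mu l)) = exp (L a) * kt s" .
    qed
    then show ?thesis unfolding K_def by simp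
  qed
  have KI: "integral {0..A} K > 0"
    by (rule pos_integral[OF A Kc _ _ , of 0]) (use Knn K0 A in auto)
  define D where "D = integral {0..A} (\<lambda>a. a * k a * xstar mu zeta c a)"
  have D_eq: "D = c * integral {0..A} K"
  proof -
    have "D = integral {0..A} (\<lambda>a. c * (a * kt a))"
      unfolding D_def by (rule integral_cong) (simp add: xstar_eq kt_def)
    also have "\<dots> = c * integral {0..A} (\<lambda>a. a * kt a)" by simp
    also have "integral {0..A} (\<lambda>a. a * kt a) = integral {0..A} K"
      unfolding K_def by (rule by_parts_K[OF A ktabs S ktc kt1])
    finally show ?thesis .
  qed
  have Dpos: "D > 0" using D_eq c KI by simp
  define P where "P t = integral {0..A} (\<lambda>a. K a * B (t - a))" for t
  have Bc': "continuous_on {0..A} (\<lambda>a. B (q - a))" for q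
    by (rule continuous_on_compose2[OF Bc]) (auto intro!: continuous_intros)
  have P0: "P 0 > 0"
  proof -
    have "integral {0..A} (\<lambda>a. K a * B (0 - a)) > 0"
      by (rule pos_integral[OF A _ _ _, of _ 0]) (use Knn K0 Bpos A Bc'[of 0] in \<open>auto intro!: continuous_intros Kc simp: less_imp_le\<close>)
    then show ?thesis unfolding P_def by simp
  qed
  define Pi0 where "Pi0 = P 0 / D"
  have Pi0pos: "Pi0 > 0" unfolding Pi0_def using P0 Dpos by simp
  have Pi_eq: "PiF A k mu zeta c (\<lambda>a. x a t) = exp (zeta * t - F t) * Pi0" if t: "t \<ge> 0" for t
  proof -
    have "integral {0..A} (\<lambda>a. pi0 A k mu zeta a * x a t) = integral {0..A} (\<lambda>a. exp (zeta * t - F t) * (K a * B (t - a)))"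
    proof (rule integral_cong)
      fix a assume a: "a \<in> {0..A}"
      have "exp (L a) * l a = 1" unfolding l_def by (simp add: exp_minus)
      then show "pi0 A k mu zeta a * x a t = exp (zeta * t - F t) * (K a * B (t - a))"
        using pi0_eq[OF a] x_eq[OF a t]
        by (metis (no_types, lifting) mult.commute mult.left_commute mult.right_neutral)
    qed
    also have "\<dots> = exp (zeta * t - F t) * P t" unfolding P_def by simp
    also have "P t = P 0" unfolding P_def using cons[OF t] cons[of 0] by simp
    finally show ?thesis unfolding PiF_def Pi0_def D_def[symmetric] by simp
  qed
  define psi where "psi s = B s / (c * Pi0) - 1" for s
  show ?thesis
  proof (rule exI[of _ psi], intro conjI allI impI ballI)
    fix s :: real assume "s \<ge> - A"
    show "psi s > -1" unfolding psi_def using Bpos[of s] c Pi0pos by simp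
  next
    fix t :: real assume t: "t \<ge> 0"
    show "PiF A k mu zeta c (\<lambda>a. x a t) > 0" using Pi_eq[OF t] Pi0pos by simp
  next
    fix t a :: real assume t: "t \<ge> 0" and a: "a \<in> {0..A}"
    show "psi (t - a) = x a t / (xstar mu zeta c a * PiF A k mu zeta c (\<lambda>a. x a t)) - 1"
      unfolding psi_def Pi_eq[OF t] xstar_eq[OF a] x_eq[OF a t]
      using lpos[of a] c Pi0pos by (simp add: field_simps)
  next
    fix t :: real assume t: "t \<ge> 0"
    have "((\<lambda>t. zeta * t - F t + ln Pi0) has_real_derivative (zeta - w t + 0)) (at t within {0..})"
      by (intro DERIV_add DERIV_diff DERIV_cmult_Id DERIV_const Fd t)
    then have d: "((\<lambda>t. zeta * t - F t + ln Pi0) has_real_derivative (zeta - u t - G t)) (at t within {0..})"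
      unfolding w_def by (simp add: diff_diff_eq)
    show "((\<lambda>t. ln (PiF A k mu zeta c (\<lambda>a. x a t))) has_real_derivative (zeta - u t - G t)) (at t within {0..})"
    proof (rule has_field_derivative_transform_within[OF d zero_less_one])
      show "t \<in> {0..}" using t by simp
      fix y :: real assume y: "y \<in> {0..}" "dist y t < 1"
      show "zeta * y - F y + ln Pi0 = ln (PiF A k mu zeta c (\<lambda>a. x a y))"
        using Pi_eq[of y] y Pi0pos by (simp add: ln_mult)
    qed
  next
    fix t :: real assume t: "t \<ge> 0"
    have h1: "((\<lambda>a. kt a * B (t - a)) has_integral B t) {0..A}"
      using Bren[OF t] absint_cont_integrable[OF ktabs Bc'[of t]] by (simp add: has_integral_integral)
    have h2: "(kt has_integral 1) {0..A}" using kti kt1 by (metis has_integral_integral)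
    have "((\<lambda>a. kt a * B (t - a) / (c * Pi0) - kt a) has_integral (B t / (c * Pi0) - 1)) {0..A}"
      by (intro has_integral_diff has_integral_divide h1 h2)
    then show "((\<lambda>a. ktilde k mu zeta a * psi (t - a)) has_integral psi t) {0..A}"
      unfolding psi_def
      by (rule has_integral_cong[THEN iffD1, rotated]) (simp add: ktilde_eq field_simps)
  qed
qed

theorem proposition2:
  fixes A :: real
    and mu1 mu2 k1 k2 g1 g2 :: "real \<Rightarrow> real"
    and zeta1 zeta2 c1 c2 :: real
    and u :: "real \<Rightarrow> real"
    and x1 x2 :: "real \<Rightarrow> real \<Rightarrow> real"
    and x10 x20 :: "real \<Rightarrow> real"
  assumes A_pos: "A > 0"
    and pc: "pc_on 0 A mu1" "pc_on 0 A mu2" "pc_on 0 A k1" "pc_on 0 A k2"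
            "pc_on 0 A g1" "pc_on 0 A g2"
    and nonneg: "\<forall>a\<in>{0..A}. mu1 a \<ge> 0 \<and> mu2 a \<ge> 0 \<and> k1 a \<ge> 0 \<and> k2 a \<ge> 0
                              \<and> g1 a \<ge> 0 \<and> g2 a \<ge> 0"
    and int_pos: "integral {0..A} mu1 > 0" "integral {0..A} mu2 > 0"
                 "integral {0..A} k1 > 0" "integral {0..A} k2 > 0"
                 "integral {0..A} g1 > 0" "integral {0..A} g2 > 0"
    and zeta1: "integral {0..A} (\<lambda>a. k1 a * exp (- integral {0..a} (\<lambda>s. mu1 s + zeta1))) = 1"
    and zeta2: "integral {0..A} (\<lambda>a. k2 a * exp (- integral {0..a} (\<lambda>s. mu2 s + zeta2))) = 1"
    and c_pos: "c1 > 0" "c2 > 0"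
    and u_cont: "continuous_on {0..} u"
    \<comment> \<open>notion of solution\<close>
    and x_cont: "continuous_on ({0..A} \<times> {0..}) (\<lambda>(a, t). x1 a t)"
                "continuous_on ({0..A} \<times> {0..}) (\<lambda>(a, t). x2 a t)"
    and x_F: "\<forall>t\<ge>0. (\<lambda>a. x1 a t) \<in> Fset A k1 \<and> (\<lambda>a. x2 a t) \<in> Fset A k2"
    and x_init: "x10 \<in> Fset A k1" "x20 \<in> Fset A k2"
                "\<forall>a\<in>{0..A}. x1 a 0 = x10 a \<and> x2 a 0 = x20 a"
    and x_bc: "\<forall>t\<ge>0. x1 0 t = integral {0..A} (\<lambda>a. k1 a * x1 a t)
                    \<and> x2 0 t = integral {0..A} (\<lambda>a. k2 a * x2 a t)"
    and x1_char: "\<forall>a t h. 0 \<le> a \<longrightarrow> 0 \<le> t \<longrightarrow> 0 \<le> h \<longrightarrow> a + h \<le> A \<longrightarrow>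
        x1 (a + h) (t + h) = x1 a t * exp (- integral {0..h} (\<lambda>s.
            mu1 (a + s) + u (t + s) + integral {0..A} (\<lambda>\<alpha>. g1 \<alpha> * x2 \<alpha> (t + s))))"
    and x2_char: "\<forall>a t h. 0 \<le> a \<longrightarrow> 0 \<le> t \<longrightarrow> 0 \<le> h \<longrightarrow> a + h \<le> A \<longrightarrow>
        x2 (a + h) (t + h) = x2 a t * exp (- integral {0..h} (\<lambda>s.
            mu2 (a + s) + u (t + s) + 1 / integral {0..A} (\<lambda>\<alpha>. g2 \<alpha> * x1 \<alpha> (t + s))))"
  shows "\<exists>psi1 psi2 :: real \<Rightarrow> real.
    let eta1 = (\<lambda>t. ln (PiF A k1 mu1 zeta1 c1 (\<lambda>a. x1 a t)));
        eta2 = (\<lambda>t. ln (PiF A k2 mu2 zeta2 c2 (\<lambda>a. x2 a t))) in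
    (\<forall>s\<ge>-A. psi1 s > -1 \<and> psi2 s > -1) \<and>
    (\<forall>t\<ge>0. \<forall>a\<in>{0..A}.
        psi1 (t - a) = x1 a t / (xstar mu1 zeta1 c1 a * PiF A k1 mu1 zeta1 c1 (\<lambda>a. x1 a t)) - 1 \<and>
        psi2 (t - a) = x2 a t / (xstar mu2 zeta2 c2 a * PiF A k2 mu2 zeta2 c2 (\<lambda>a. x2 a t)) - 1) \<and>
    (\<forall>t\<ge>0. \<forall>a\<in>{0..A}.
        x1 a t = xstar mu1 zeta1 c1 a * exp (eta1 t) * (1 + psi1 (t - a)) \<and>
        x2 a t = xstar mu2 zeta2 c2 a * exp (eta2 t) * (1 + psi2 (t - a))) \<and>
    (\<forall>t\<ge>0. (eta1 has_real_derivative
        (zeta1 - u t - exp (eta2 t) *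
          integral {0..A} (\<lambda>a. g1 a * xstar mu2 zeta2 c2 a * (1 + psi2 (t - a)))))
        (at t within {0..})) \<and>
    (\<forall>t\<ge>0. (eta2 has_real_derivative
        (zeta2 - u t - exp (- eta1 t) /
          integral {0..A} (\<lambda>a. g2 a * xstar mu1 zeta1 c1 a * (1 + psi1 (t - a)))))
        (at t within {0..})) \<and>
    (\<forall>t\<ge>0. ((\<lambda>a. ktilde k1 mu1 zeta1 a * psi1 (t - a)) has_integral psi1 t) {0..A} \<and>
            ((\<lambda>a. ktilde k2 mu2 zeta2 a * psi2 (t - a)) has_integral psi2 t) {0..A}) \<and>
    eta1 0 = ln (PiF A k1 mu1 zeta1 c1 x10) \<and> eta2 0 = ln (PiF A k2 mu2 zeta2 c2 x20) \<and>
    (\<forall>a\<in>{0..A}.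
        psi1 (- a) = x10 a / (xstar mu1 zeta1 c1 a * PiF A k1 mu1 zeta1 c1 x10) - 1 \<and>
        psi2 (- a) = x20 a / (xstar mu2 zeta2 c2 a * PiF A k2 mu2 zeta2 c2 x20) - 1)"
proof -
  have xpos1: "\<forall>t\<ge>0. \<forall>a\<in>{0..A}. x1 a t > 0" using x_F by (simp add: Fset_def)
  have xpos2: "\<forall>t\<ge>0. \<forall>a\<in>{0..A}. x2 a t > 0" using x_F by (simp add: Fset_def)
  have bc1: "\<forall>t\<ge>0. x1 0 t = integral {0..A} (\<lambda>a. k1 a * x1 a t)" using x_bc by simp
  have bc2: "\<forall>t\<ge>0. x2 0 t = integral {0..A} (\<lambda>a. k2 a * x2 a t)" using x_bc by simp
  have kn1: "\<forall>a\<in>{0..A}. k1 a \<ge> 0" and kn2: "\<forall>a\<in>{0..A}. k2 a \<ge> 0"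
    and gn2: "\<forall>a\<in>{0..A}. g2 a \<ge> 0" using nonneg by auto
  define G1 where "G1 t = integral {0..A} (\<lambda>\<alpha>. g1 \<alpha> * x2 \<alpha> t)" for t
  define I2 where "I2 t = integral {0..A} (\<lambda>\<alpha>. g2 \<alpha> * x1 \<alpha> t)" for t
  have G1c: "continuous_on {0..} G1"
    unfolding G1_def by (rule param_cont[OF pc_absint[OF pc(5)] x_cont(2)])
  have I2c: "continuous_on {0..} I2"
    unfolding I2_def by (rule param_cont[OF pc_absint[OF pc(6)] x_cont(1)])
  have I2pos: "I2 t > 0" if t: "t \<ge> 0" for t
  proof -
    have cs: "continuous_on {0..A} (\<lambda>a. x1 a t)" by (rule cont_slice[OF x_cont(1) t])
    obtain a0 where a0: "a0 \<in> {0..A}" "\<forall>y\<in>{0..A}. x1 a0 t \<le> x1 y t"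
      using continuous_attains_inf[OF compact_Icc _ cs] A_pos by auto
    define m where "m = x1 a0 t"
    have m: "m > 0" unfolding m_def using xpos1 a0 t by auto
    have g2i: "g2 integrable_on {0..A}" using pc_absint[OF pc(6)] by (simp add: absolutely_integrable_on_def)
    have "integral {0..A} (\<lambda>a. g2 a * m) \<le> I2 t"
      unfolding I2_def
    proof (rule integral_le)
      show "(\<lambda>a. g2 a * m) integrable_on {0..A}" using g2i by (rule integrable_on_mult_left)
      show "(\<lambda>a. g2 a * x1 a t) integrable_on {0..A}"
        by (rule absint_cont_integrable[OF pc_absint[OF pc(6)] cs])
      fix a assume a: "a \<in> {0..A}"
      show "g2 a * m \<le> g2 a * x1 a t" using a0 a gn2 unfolding m_def by (intro mult_left_mono) auto
    qed
    moreover have "integral {0..A} (\<lambda>a. g2 a * m) = integral {0..A} g2 * m" by simp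
    moreover have "integral {0..A} g2 * m > 0" using int_pos(6) m by simp
    ultimately show ?thesis by linarith
  qed
  have G2c: "continuous_on {0..} (\<lambda>t. 1 / I2 t)"
    by (intro continuous_intros I2c) (use I2pos in \<open>auto simp: less_imp_neq[symmetric]\<close>)
  obtain psi1 where P1: "\<forall>s\<ge>-A. psi1 s > -1" and Q1: "\<forall>t\<ge>0. PiF A k1 mu1 zeta1 c1 (\<lambda>a. x1 a t) > 0"
    and R1: "\<forall>t\<ge>0. \<forall>a\<in>{0..A}. psi1 (t - a) = x1 a t / (xstar mu1 zeta1 c1 a * PiF A k1 mu1 zeta1 c1 (\<lambda>a. x1 a t)) - 1"
    and D1: "\<forall>t\<ge>0. ((\<lambda>t. ln (PiF A k1 mu1 zeta1 c1 (\<lambda>a. x1 a t))) has_real_derivative (zeta1 - u t - G1 t)) (at t within {0..})"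
    and E1: "\<forall>t\<ge>0. ((\<lambda>a. ktilde k1 mu1 zeta1 a * psi1 (t - a)) has_integral psi1 t) {0..A}"
    using generic[OF A_pos pc(1) pc(3) kn1 zeta1 c_pos(1) u_cont G1c x_cont(1) xpos1 bc1]
      x1_char unfolding G1_def by blast
  obtain psi2 where P2: "\<forall>s\<ge>-A. psi2 s > -1" and Q2: "\<forall>t\<ge>0. PiF A k2 mu2 zeta2 c2 (\<lambda>a. x2 a t) > 0"
    and R2: "\<forall>t\<ge>0. \<forall>a\<in>{0..A}. psi2 (t - a) = x2 a t / (xstar mu2 zeta2 c2 a * PiF A k2 mu2 zeta2 c2 (\<lambda>a. x2 a t)) - 1"
    and D2: "\<forall>t\<ge>0. ((\<lambda>t. ln (PiF A k2 mu2 zeta2 c2 (\<lambda>a. x2 a t))) has_real_derivative (zeta2 - u t - 1 / I2 t)) (at t within {0..})"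
    and E2: "\<forall>t\<ge>0. ((\<lambda>a. ktilde k2 mu2 zeta2 a * psi2 (t - a)) has_integral psi2 t) {0..A}"
    using generic[OF A_pos pc(2) pc(4) kn2 zeta2 c_pos(2) u_cont G2c x_cont(2) xpos2 bc2]
      x2_char unfolding I2_def by blast
  define Pi1 where "Pi1 t = PiF A k1 mu1 zeta1 c1 (\<lambda>a. x1 a t)" for t
  define Pi2 where "Pi2 t = PiF A k2 mu2 zeta2 c2 (\<lambda>a. x2 a t)" for t
  have xs1: "xstar mu1 zeta1 c1 a > 0" for a unfolding xstar_def using c_pos by simp
  have xs2: "xstar mu2 zeta2 c2 a > 0" for a unfolding xstar_def using c_pos by simp
  have X1: "x1 a t = xstar mu1 zeta1 c1 a * exp (ln (Pi1 t)) * (1 + psi1 (t - a))"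
    if t: "t \<ge> 0" and a: "a \<in> {0..A}" for t a
  proof -
    have "Pi1 t > 0" unfolding Pi1_def using Q1 t by simp
    then show ?thesis using R1 t a xs1[of a] unfolding Pi1_def by (simp add: field_simps)
  qed
  have X2: "x2 a t = xstar mu2 zeta2 c2 a * exp (ln (Pi2 t)) * (1 + psi2 (t - a))"
    if t: "t \<ge> 0" and a: "a \<in> {0..A}" for t a
  proof -
    have "Pi2 t > 0" unfolding Pi2_def using Q2 t by simp
    then show ?thesis using R2 t a xs2[of a] unfolding Pi2_def by (simp add: field_simps)
  qed
  have PiF_cong: "PiF A' k mu zeta c f = PiF A' k mu zeta c g" if "\<forall>a\<in>{0..A'}. f a = g a" for A' k mu zeta c f g
  proof -
    have "integral {0..A'} (\<lambda>a. pi0 A' k mu zeta a * f a) = integral {0..A'} (\<lambda>a. pi0 A' k mu zeta a * g a)"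
      by (rule integral_cong) (use that in auto)
    then show ?thesis unfolding PiF_def by simp
  qed
  have init1: "PiF A k1 mu1 zeta1 c1 (\<lambda>a. x1 a 0) = PiF A k1 mu1 zeta1 c1 x10"
    by (rule PiF_cong) (use x_init(3) in auto)
  have init2: "PiF A k2 mu2 zeta2 c2 (\<lambda>a. x2 a 0) = PiF A k2 mu2 zeta2 c2 x20"
    by (rule PiF_cong) (use x_init(3) in auto)
  have C1: "\<forall>s\<ge>-A. psi1 s > -1 \<and> psi2 s > -1" using P1 P2 by auto
  have C2: "\<forall>t\<ge>0. \<forall>a\<in>{0..A}.
        psi1 (t - a) = x1 a t / (xstar mu1 zeta1 c1 a * PiF A k1 mu1 zeta1 c1 (\<lambda>a. x1 a t)) - 1 \<and>
        psi2 (t - a) = x2 a t / (xstar mu2 zeta2 c2 a * PiF A k2 mu2 zeta2 c2 (\<lambda>a. x2 a t)) - 1"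
    using R1 R2 by auto
  have C3: "\<forall>t\<ge>0. \<forall>a\<in>{0..A}.
        x1 a t = xstar mu1 zeta1 c1 a * exp (ln (PiF A k1 mu1 zeta1 c1 (\<lambda>a. x1 a t))) * (1 + psi1 (t - a)) \<and>
        x2 a t = xstar mu2 zeta2 c2 a * exp (ln (PiF A k2 mu2 zeta2 c2 (\<lambda>a. x2 a t))) * (1 + psi2 (t - a))"
    using X1 X2 unfolding Pi1_def Pi2_def by auto
  have C4: "\<forall>t\<ge>0. ((\<lambda>t. ln (PiF A k1 mu1 zeta1 c1 (\<lambda>a. x1 a t))) has_real_derivative
        (zeta1 - u t - exp (ln (PiF A k2 mu2 zeta2 c2 (\<lambda>a. x2 a t))) *
          integral {0..A} (\<lambda>a. g1 a * xstar mu2 zeta2 c2 a * (1 + psi2 (t - a)))))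
        (at t within {0..})"
  proof (intro allI impI)
    fix t :: real assume t: "t \<ge> 0"
    have "G1 t = integral {0..A} (\<lambda>a. exp (ln (Pi2 t)) * (g1 a * xstar mu2 zeta2 c2 a * (1 + psi2 (t - a))))"
      unfolding G1_def by (rule integral_cong) (use X2[OF t] in \<open>simp add: algebra_simps\<close>)
    also have "\<dots> = exp (ln (Pi2 t)) * integral {0..A} (\<lambda>a. g1 a * xstar mu2 zeta2 c2 a * (1 + psi2 (t - a)))"
      by simp
    finally have Geq: "G1 t = exp (ln (PiF A k2 mu2 zeta2 c2 (\<lambda>a. x2 a t))) * integral {0..A} (\<lambda>a. g1 a * xstar mu2 zeta2 c2 a * (1 + psi2 (t - a)))"
      unfolding Pi2_def .
    have d: "((\<lambda>t. ln (PiF A k1 mu1 zeta1 c1 (\<lambda>a. x1 a t))) has_real_derivative (zeta1 - u t - G1 t)) (at t within {0..})"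
      using D1 t by simp
    show "((\<lambda>t. ln (PiF A k1 mu1 zeta1 c1 (\<lambda>a. x1 a t))) has_real_derivative
        (zeta1 - u t - exp (ln (PiF A k2 mu2 zeta2 c2 (\<lambda>a. x2 a t))) *
          integral {0..A} (\<lambda>a. g1 a * xstar mu2 zeta2 c2 a * (1 + psi2 (t - a)))))
        (at t within {0..})"
      using d unfolding Geq .
  qed
  have C5: "\<forall>t\<ge>0. ((\<lambda>t. ln (PiF A k2 mu2 zeta2 c2 (\<lambda>a. x2 a t))) has_real_derivative
        (zeta2 - u t - exp (- ln (PiF A k1 mu1 zeta1 c1 (\<lambda>a. x1 a t))) /
          integral {0..A} (\<lambda>a. g2 a * xstar mu1 zeta1 c1 a * (1 + psi1 (t - a)))))
        (at t within {0..})"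
  proof (intro allI impI)
    fix t :: real assume t: "t \<ge> 0"
    have p1: "Pi1 t > 0" unfolding Pi1_def using Q1 t by simp
    have "I2 t = integral {0..A} (\<lambda>a. exp (ln (Pi1 t)) * (g2 a * xstar mu1 zeta1 c1 a * (1 + psi1 (t - a))))"
      unfolding I2_def by (rule integral_cong) (use X1[OF t] in \<open>simp add: algebra_simps\<close>)
    also have "\<dots> = Pi1 t * integral {0..A} (\<lambda>a. g2 a * xstar mu1 zeta1 c1 a * (1 + psi1 (t - a)))"
      using p1 by simp
    finally have I: "I2 t = Pi1 t * integral {0..A} (\<lambda>a. g2 a * xstar mu1 zeta1 c1 a * (1 + psi1 (t - a)))" .
    have Ieq: "1 / I2 t = exp (- ln (Pi1 t)) / integral {0..A} (\<lambda>a. g2 a * xstar mu1 zeta1 c1 a * (1 + psi1 (t - a)))"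
      unfolding I using p1 by (simp add: exp_minus field_simps)
    have d: "((\<lambda>t. ln (PiF A k2 mu2 zeta2 c2 (\<lambda>a. x2 a t))) has_real_derivative (zeta2 - u t - 1 / I2 t)) (at t within {0..})"
      using D2 t by simp
    show "((\<lambda>t. ln (PiF A k2 mu2 zeta2 c2 (\<lambda>a. x2 a t))) has_real_derivative
        (zeta2 - u t - exp (- ln (PiF A k1 mu1 zeta1 c1 (\<lambda>a. x1 a t))) /
          integral {0..A} (\<lambda>a. g2 a * xstar mu1 zeta1 c1 a * (1 + psi1 (t - a)))))
        (at t within {0..})"
      using d unfolding Ieq Pi1_def .
  qed
  have C6: "\<forall>t\<ge>0. ((\<lambda>a. ktilde k1 mu1 zeta1 a * psi1 (t - a)) has_integral psi1 t) {0..A} \<and>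
            ((\<lambda>a. ktilde k2 mu2 zeta2 a * psi2 (t - a)) has_integral psi2 t) {0..A}"
    using E1 E2 by auto
  have C7a: "ln (PiF A k1 mu1 zeta1 c1 (\<lambda>a. x1 a 0)) = ln (PiF A k1 mu1 zeta1 c1 x10)" using init1 by simp
  have C7b: "ln (PiF A k2 mu2 zeta2 c2 (\<lambda>a. x2 a 0)) = ln (PiF A k2 mu2 zeta2 c2 x20)" using init2 by simp
  have C8: "\<forall>a\<in>{0..A}.
        psi1 (- a) = x10 a / (xstar mu1 zeta1 c1 a * PiF A k1 mu1 zeta1 c1 x10) - 1 \<and>
        psi2 (- a) = x20 a / (xstar mu2 zeta2 c2 a * PiF A k2 mu2 zeta2 c2 x20) - 1"
  proof
    fix a assume a: "a \<in> {0..A}"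
    have "psi1 (0 - a) = x1 a 0 / (xstar mu1 zeta1 c1 a * PiF A k1 mu1 zeta1 c1 (\<lambda>a. x1 a 0)) - 1"
      using R1 a by auto
    then have 1: "psi1 (- a) = x10 a / (xstar mu1 zeta1 c1 a * PiF A k1 mu1 zeta1 c1 x10) - 1"
      using init1 x_init(3) a by simp
    have "psi2 (0 - a) = x2 a 0 / (xstar mu2 zeta2 c2 a * PiF A k2 mu2 zeta2 c2 (\<lambda>a. x2 a 0)) - 1"
      using R2 a by auto
    then have 2: "psi2 (- a) = x20 a / (xstar mu2 zeta2 c2 a * PiF A k2 mu2 zeta2 c2 x20) - 1"
      using init2 x_init(3) a by simp
    show "psi1 (- a) = x10 a / (xstar mu1 zeta1 c1 a * PiF A k1 mu1 zeta1 c1 x10) - 1 \<and>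
        psi2 (- a) = x20 a / (xstar mu2 zeta2 c2 a * PiF A k2 mu2 zeta2 c2 x20) - 1"
      using 1 2 by simp
  qed
  show ?thesis
    unfolding Let_def
    by (intro exI[of _ psi1] exI[of _ psi2] conjI C1 C2 C3 C4 C5 C6 C7a C7b C8)
qed

end
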